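(* Let $\Gamma$ be a group and $\sigma\in\mathrm{Aut}(\Gamma)$ such that $\Gamma\rtimes_\sigma\mathbb Z$ is finitely generated, and let $G$ be a finite group. Then (i) $\mathrm{Hom}_\sigma(\Gamma,G)$ is finite, and (ii) $\frac{1}{|G|}\#\mathrm{Hom}(\Gamma\rtimes_\sigma\mathbb Z,G)=\#\big(\mathrm{Hom}_\sigma(\Gamma,G)/G\big)$; in particular $|G|$ divides $\#\mathrm{Hom}(\Gamma\rtimes_\sigma\mathbb Z,G)$.
   Context: $G$ acts on $\mathrm{Hom}(\Gamma,G)$ by conjugation, $(h\cdot\phi)(\gamma)=h\phi(\gamma)h^{-1}$. For $\sigma\in\mathrm{Aut}(\Gamma)$ set $\phi^\sigma(\gamma)=\phi(\sigma^{-1}\gamma)$, and let $\mathrm{Hom}_\sigma(\Gamma,G)$ be the set of $\phi\in\mathrm{Hom}(\Gamma,G)$ with $\phi^\sigma$ conjugate to $\phi$ by an element of $G$; it is stable under the $G$-action and $\mathrm{Hom}_\sigma(\Gamma,G)/G$ denotes its set of orbits. $\Gamma\rtimes_\sigma\mathbb Z$ is the semidirect product where the generator $1\in\mathbb Z$ acts on $\Gamma$ by $\sigma$. *)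

theory Defs
  imports "HOL-Algebra.Algebra"
begin

definition aut_zpow :: "('a, 'b) monoid_scheme \<Rightarrow> ('a \<Rightarrow> 'a) \<Rightarrow> int \<Rightarrow> 'a \<Rightarrow> 'a" where
  "aut_zpow \<Gamma> \<sigma> m = (if 0 \<le> m then \<sigma> ^^ nat m else (inv_into (carrier \<Gamma>) \<sigma>) ^^ nat (- m))"

definition semidirect_Z :: "('a, 'b) monoid_scheme \<Rightarrow> ('a \<Rightarrow> 'a) \<Rightarrow> ('a \<times> int) monoid" where
  "semidirect_Z \<Gamma> \<sigma> =
     \<lparr> carrier = carrier \<Gamma> \<times> (UNIV :: int set),
       monoid.mult = (\<lambda>(g, m) (h, n). (g \<otimes>\<^bsub>\<Gamma>\<^esub> aut_zpow \<Gamma> \<sigma> m h, m + n)),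
       monoid.one = (\<one>\<^bsub>\<Gamma>\<^esub>, 0) \<rparr>"

definition finitely_generated :: "('a, 'b) monoid_scheme \<Rightarrow> bool" where
  "finitely_generated H \<longleftrightarrow> (\<exists>S. finite S \<and> S \<subseteq> carrier H \<and> generate H S = carrier H)"

text \<open>Hom(\<Gamma>,G): homomorphisms, taken extensional (undefined off the carrier) so that
  they are genuine set-theoretic maps carrier \<Gamma> \<rightarrow> carrier G.\<close>
definition Hom :: "('a, 'b) monoid_scheme \<Rightarrow> ('c, 'd) monoid_scheme \<Rightarrow> ('a \<Rightarrow> 'c) set" where
  "Hom \<Gamma> G = hom \<Gamma> G \<inter> extensional (carrier \<Gamma>)"

definition conj_act :: "('a, 'b) monoid_scheme \<Rightarrow> ('c, 'd) monoid_scheme \<Rightarrow> 'c \<Rightarrow> ('a \<Rightarrow> 'c) \<Rightarrow> ('a \<Rightarrow> 'c)" where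
  "conj_act \<Gamma> G h \<phi> = (\<lambda>\<gamma>\<in>carrier \<Gamma>. h \<otimes>\<^bsub>G\<^esub> \<phi> \<gamma> \<otimes>\<^bsub>G\<^esub> inv\<^bsub>G\<^esub> h)"

definition twist :: "('a, 'b) monoid_scheme \<Rightarrow> ('a \<Rightarrow> 'a) \<Rightarrow> ('a \<Rightarrow> 'c) \<Rightarrow> ('a \<Rightarrow> 'c)" where
  "twist \<Gamma> \<sigma> \<phi> = (\<lambda>\<gamma>\<in>carrier \<Gamma>. \<phi> (inv_into (carrier \<Gamma>) \<sigma> \<gamma>))"

definition Hom_sigma :: "('a, 'b) monoid_scheme \<Rightarrow> ('a \<Rightarrow> 'a) \<Rightarrow> ('c, 'd) monoid_scheme \<Rightarrow> ('a \<Rightarrow> 'c) set" where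
  "Hom_sigma \<Gamma> \<sigma> G = {\<phi> \<in> Hom \<Gamma> G. \<exists>h\<in>carrier G. conj_act \<Gamma> G h \<phi> = twist \<Gamma> \<sigma> \<phi>}"

definition Hom_sigma_orbits :: "('a, 'b) monoid_scheme \<Rightarrow> ('a \<Rightarrow> 'a) \<Rightarrow> ('c, 'd) monoid_scheme \<Rightarrow> ('a \<Rightarrow> 'c) set set" where
  "Hom_sigma_orbits \<Gamma> \<sigma> G = (\<lambda>\<phi>. (\<lambda>h. conj_act \<Gamma> G h \<phi>) ` carrier G) ` Hom_sigma \<Gamma> \<sigma> G"

end

theory Submission
  imports Defs
begin

lemma group_actionI':
  assumes G: "group G"
    and cl: "\<And>g x. g \<in> carrier G \<Longrightarrow> x \<in> E \<Longrightarrow> f g x \<in> E"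
    and comp: "\<And>g h x. g \<in> carrier G \<Longrightarrow> h \<in> carrier G \<Longrightarrow> x \<in> E \<Longrightarrow> f (g \<otimes>\<^bsub>G\<^esub> h) x = f g (f h x)"
    and one: "\<And>x. x \<in> E \<Longrightarrow> f \<one>\<^bsub>G\<^esub> x = x"
  shows "group_action G E (\<lambda>g. \<lambda>x\<in>E. f g x)"
proof -
  interpret group G by fact
  have inv: "f (inv\<^bsub>G\<^esub> g) (f g x) = x" if "g \<in> carrier G" "x \<in> E" for g x
    using comp[of "inv\<^bsub>G\<^esub> g" g x] that one by simp
  have inv2: "f g (f (inv\<^bsub>G\<^esub> g) x) = x" if "g \<in> carrier G" "x \<in> E" for g x
    using comp[of g "inv\<^bsub>G\<^esub> g" x] that one by simp
  have B: "(\<lambda>x\<in>E. f g x) \<in> Bij E" if g: "g \<in> carrier G" for g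
  proof -
    have "bij_betw (\<lambda>x\<in>E. f g x) E E"
    proof (rule bij_betw_byWitness[where f'="\<lambda>x. f (inv\<^bsub>G\<^esub> g) x"])
      show "\<forall>a\<in>E. f (inv\<^bsub>G\<^esub> g) ((\<lambda>x\<in>E. f g x) a) = a" using inv g by simp
      show "\<forall>a'\<in>E. (\<lambda>x\<in>E. f g x) (f (inv\<^bsub>G\<^esub> g) a') = a'" using inv2 g cl by simp
      show "(\<lambda>x\<in>E. f g x) ` E \<subseteq> E" using cl g by auto
      show "f (inv\<^bsub>G\<^esub> g) ` E \<subseteq> E" using cl g by auto
    qed
    then show ?thesis by (simp add: Bij_def)
  qed
  show ?thesis
    unfolding group_action_def group_hom_def group_hom_axioms_def
  proof (intro conjI)
    show "group G" by fact
    show "group (BijGroup E)" by (rule group_BijGroup)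
    show "(\<lambda>g. \<lambda>x\<in>E. f g x) \<in> hom G (BijGroup E)"
    proof (rule homI)
      fix g assume "g \<in> carrier G" then show "(\<lambda>x\<in>E. f g x) \<in> carrier (BijGroup E)"
        using B by (simp add: BijGroup_def)
    next
      fix g h assume gh: "g \<in> carrier G" "h \<in> carrier G"
      then show "(\<lambda>x\<in>E. f (g \<otimes>\<^bsub>G\<^esub> h) x) = (\<lambda>x\<in>E. f g x) \<otimes>\<^bsub>BijGroup E\<^esub> (\<lambda>x\<in>E. f h x)"
        using B comp cl by (auto simp: BijGroup_def compose_def)
    qed
  qed
qed


lemma (in group) cancel_simps[simp]:
  "x \<in> carrier G \<Longrightarrow> z \<in> carrier G \<Longrightarrow> inv x \<otimes> (x \<otimes> z) = z"
  "x \<in> carrier G \<Longrightarrow> z \<in> carrier G \<Longrightarrow> x \<otimes> (inv x \<otimes> z) = z"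
  by (simp_all add: m_assoc[symmetric])

locale sdz = group \<Gamma> for \<Gamma> (structure) +
  fixes \<sigma>
  assumes iso_s: "\<sigma> \<in> iso \<Gamma> \<Gamma>"
begin

abbreviation "\<tau> \<equiv> inv_into (carrier \<Gamma>) \<sigma>"
abbreviation "A \<equiv> aut_zpow \<Gamma> \<sigma>"

lemma tau_iso: "\<tau> \<in> iso \<Gamma> \<Gamma>" using iso_set_sym[OF iso_s] .

lemma s_closed[simp]: "x \<in> carrier \<Gamma> \<Longrightarrow> \<sigma> x \<in> carrier \<Gamma>"
  using iso_s by (auto simp: iso_def hom_def)
lemma t_closed[simp]: "x \<in> carrier \<Gamma> \<Longrightarrow> \<tau> x \<in> carrier \<Gamma>"
  using tau_iso by (auto simp: iso_def hom_def)
lemma s_mult[simp]: "x \<in> carrier \<Gamma> \<Longrightarrow> y \<in> carrier \<Gamma> \<Longrightarrow> \<sigma> (x \<otimes> y) = \<sigma> x \<otimes> \<sigma> y"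
  using iso_s by (auto simp: iso_def hom_def)
lemma t_mult[simp]: "x \<in> carrier \<Gamma> \<Longrightarrow> y \<in> carrier \<Gamma> \<Longrightarrow> \<tau> (x \<otimes> y) = \<tau> x \<otimes> \<tau> y"
  using tau_iso by (auto simp: iso_def hom_def)
lemma s_t[simp]: "x \<in> carrier \<Gamma> \<Longrightarrow> \<sigma> (\<tau> x) = x"
  using iso_s by (auto simp: iso_def bij_betw_def intro: f_inv_into_f)
lemma t_s[simp]: "x \<in> carrier \<Gamma> \<Longrightarrow> \<tau> (\<sigma> x) = x"
  using iso_s by (auto simp: iso_def bij_betw_def intro: inv_into_f_f)

lemma pow_closed: "x \<in> carrier \<Gamma> \<Longrightarrow> (f ^^ k) x \<in> carrier \<Gamma>"
  if "\<And>y. y \<in> carrier \<Gamma> \<Longrightarrow> f y \<in> carrier \<Gamma>" for f k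
  using that by (induction k) auto

lemma pow_mult: "x \<in> carrier \<Gamma> \<Longrightarrow> y \<in> carrier \<Gamma> \<Longrightarrow> (f ^^ k) (x \<otimes> y) = (f ^^ k) x \<otimes> (f ^^ k) y"
  if "\<And>y. y \<in> carrier \<Gamma> \<Longrightarrow> f y \<in> carrier \<Gamma>"
     "\<And>x y. x \<in> carrier \<Gamma> \<Longrightarrow> y \<in> carrier \<Gamma> \<Longrightarrow> f (x \<otimes> y) = f x \<otimes> f y" for f k x y
  using that by (induction k) (auto simp: pow_closed)

lemma A_closed[simp]: "x \<in> carrier \<Gamma> \<Longrightarrow> A m x \<in> carrier \<Gamma>"
  unfolding aut_zpow_def by (auto intro: pow_closed)

lemma A_mult[simp]: "x \<in> carrier \<Gamma> \<Longrightarrow> y \<in> carrier \<Gamma> \<Longrightarrow> A m (x \<otimes> y) = A m x \<otimes> A m y"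
  unfolding aut_zpow_def by (auto intro: pow_mult)

lemma A_one[simp]: "A m \<one> = \<one>"
proof -
  have "A m \<one> \<otimes> A m \<one> = A m \<one> \<otimes> \<one>" using A_mult[of \<one> \<one> m] by simp
  thus ?thesis by (metis A_closed one_closed l_cancel r_one)
qed

lemma A_0[simp]: "A 0 x = x" by (simp add: aut_zpow_def)

lemma A_succ: "x \<in> carrier \<Gamma> \<Longrightarrow> A (m + 1) x = \<sigma> (A m x)"
proof (cases "0 \<le> m")
  case True
  then have "nat (m+1) = Suc (nat m)" by simp
  then show ?thesis using True by (simp add: aut_zpow_def)
next
  case False
  assume x: "x \<in> carrier \<Gamma>"
  show ?thesis
  proof (cases "m = -1")
    case True then show ?thesis using x by (simp add: aut_zpow_def)
  next
    case False
    with \<open>\<not> 0 \<le> m\<close> have "nat (-m) = Suc (nat (-(m+1)))" "\<not> 0 \<le> m+1" by auto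
    then show ?thesis using x \<open>\<not> 0 \<le> m\<close> by (simp add: aut_zpow_def pow_closed)
  qed
qed

lemma A_pred: "x \<in> carrier \<Gamma> \<Longrightarrow> A (m - 1) x = \<tau> (A m x)"
  using A_succ[of x "m - 1"] by (metis A_closed diff_add_cancel t_s)

lemma A_add: "x \<in> carrier \<Gamma> \<Longrightarrow> A m (A n x) = A (m + n) x"
proof (induction m rule: int_induct[where k=0])
  case base then show ?case by simp
next
  case (step1 i) then show ?case using A_succ[of "A n x" i] A_succ[of x "i+n"] by (simp add: algebra_simps)
next
  case (step2 i)
  then show ?case using A_pred[of "A n x" i] A_pred[of x "i+n"] by (simp add: algebra_simps)
qed

abbreviation "H \<equiv> semidirect_Z \<Gamma> \<sigma>"

lemma H_carrier[simp]: "carrier H = carrier \<Gamma> \<times> UNIV"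
  by (simp add: semidirect_Z_def)
lemma H_mult[simp]: "(g, m) \<otimes>\<^bsub>H\<^esub> (h, n) = (g \<otimes> A m h, m + n)"
  by (simp add: semidirect_Z_def)
lemma H_one[simp]: "\<one>\<^bsub>H\<^esub> = (\<one>, 0)"
  by (simp add: semidirect_Z_def)

lemma H_group: "group H"
proof (rule groupI)
  fix x y assume "x \<in> carrier H" "y \<in> carrier H"
  then show "x \<otimes>\<^bsub>H\<^esub> y \<in> carrier H" by (cases x; cases y) auto
next
  show "\<one>\<^bsub>H\<^esub> \<in> carrier H" by simp
next
  fix x y z assume "x \<in> carrier H" "y \<in> carrier H" "z \<in> carrier H"
  then show "x \<otimes>\<^bsub>H\<^esub> y \<otimes>\<^bsub>H\<^esub> z = x \<otimes>\<^bsub>H\<^esub> (y \<otimes>\<^bsub>H\<^esub> z)"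
    by (cases x; cases y; cases z) (auto simp: m_assoc A_add add.assoc)
next
  fix x assume "x \<in> carrier H"
  then show "\<one>\<^bsub>H\<^esub> \<otimes>\<^bsub>H\<^esub> x = x" by (cases x) auto
next
  fix x assume "x \<in> carrier H"
  then obtain g m where x: "x = (g, m)" "g \<in> carrier \<Gamma>" by (cases x) auto
  have "(A (-m) (inv g), -m) \<otimes>\<^bsub>H\<^esub> x = \<one>\<^bsub>H\<^esub>"
    using x A_mult[of "inv g" g "-m"] by (simp add: A_add)
  moreover have "(A (-m) (inv g), -m) \<in> carrier H" using x by simp
  ultimately show "\<exists>y\<in>carrier H. y \<otimes>\<^bsub>H\<^esub> x = \<one>\<^bsub>H\<^esub>" by blast
qed

end

lemma hom_agree_generate:
  assumes "group H" "group G" "f \<in> hom H G" "g \<in> hom H G" "S \<subseteq> carrier H"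
    "\<And>x. x \<in> S \<Longrightarrow> f x = g x" "x \<in> generate H S"
  shows "f x = g x"
  using assms(7)
proof (induction rule: generate.induct)
  case one
  then show ?case using assms group_hom.hom_one[of H G f] group_hom.hom_one[of H G g]
    by (simp add: group_hom_def group_hom_axioms_def)
next
  case (incl h) then show ?case using assms by blast
next
  case (inv h)
  then show ?case using assms group_hom.hom_inv[of H G f h] group_hom.hom_inv[of H G g h]
    by (auto simp: group_hom_def group_hom_axioms_def)
next
  case (eng h1 h2)
  have "h1 \<in> carrier H" "h2 \<in> carrier H"
    using eng.hyps group.generate_in_carrier[OF assms(1) assms(5)] by auto
  then show ?case using eng.IH assms(3,4) by (simp add: hom_mult)
qed

lemma finite_Hom:
  assumes "group H" "group G" "finite (carrier G)" "finitely_generated H"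
  shows "finite (Hom H G)"
proof -
  obtain S where S: "finite S" "S \<subseteq> carrier H" "generate H S = carrier H"
    using assms(4) unfolding finitely_generated_def by blast
  have "inj_on (\<lambda>f. restrict f S) (Hom H G)"
  proof (rule inj_onI)
    fix f g assume f: "f \<in> Hom H G" and g: "g \<in> Hom H G" and eq: "restrict f S = restrict g S"
    have "\<And>x. x \<in> carrier H \<Longrightarrow> f x = g x"
      using hom_agree_generate[OF assms(1,2) _ _ S(2), of f g] f g eq S(3)
      by (metis Hom_def IntD1 restrict_apply')
    then show "f = g" using f g unfolding Hom_def by (auto intro: extensionalityI)
  qed
  moreover have "(\<lambda>f. restrict f S) ` Hom H G \<subseteq> PiE S (\<lambda>_. carrier G)"
    using S(2) by (auto simp: Hom_def hom_def)
  moreover have "finite (PiE S (\<lambda>_. carrier G))" using S(1) assms(3) by (simp add: finite_PiE)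
  ultimately show ?thesis by (meson finite_imageD finite_subset)
qed

locale sdz2 = sdz \<Gamma> \<sigma> + G: group G for \<Gamma> (structure) and \<sigma> and G :: "('c, 'd) monoid_scheme"
begin

definition "C \<phi> g \<longleftrightarrow> (\<forall>\<delta>\<in>carrier \<Gamma>. g \<otimes>\<^bsub>G\<^esub> \<phi> \<delta> = \<phi> (\<sigma> \<delta>) \<otimes>\<^bsub>G\<^esub> g)"

definition "Pairs = {(\<phi>, g). \<phi> \<in> Hom \<Gamma> G \<and> g \<in> carrier G \<and> C \<phi> g}"

lemma hom_closed: "\<phi> \<in> hom \<Gamma> G \<Longrightarrow> x \<in> carrier \<Gamma> \<Longrightarrow> \<phi> x \<in> carrier G"
  by (auto simp: hom_def)

lemma key:
  assumes phi: "\<phi> \<in> hom \<Gamma> G" and g: "g \<in> carrier G" and C: "C \<phi> g" and d: "\<delta> \<in> carrier \<Gamma>"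
  shows "\<phi> (A m \<delta>) \<otimes>\<^bsub>G\<^esub> g [^]\<^bsub>G\<^esub> m = g [^]\<^bsub>G\<^esub> m \<otimes>\<^bsub>G\<^esub> \<phi> \<delta>"
proof (induction m rule: int_induct[where k=0])
  case base then show ?case using phi d by (simp add: hom_closed)
next
  case (step1 i)
  let ?x = "A i \<delta>"
  have x: "?x \<in> carrier \<Gamma>" using d by simp
  have p1: "g [^]\<^bsub>G\<^esub> (i+1) = g \<otimes>\<^bsub>G\<^esub> g [^]\<^bsub>G\<^esub> i"
    using G.int_pow_mult[OF g, of 1 i] g by (simp add: add.commute)
  have "\<phi> (A (i+1) \<delta>) \<otimes>\<^bsub>G\<^esub> g [^]\<^bsub>G\<^esub> (i+1) = (\<phi> (\<sigma> ?x) \<otimes>\<^bsub>G\<^esub> g) \<otimes>\<^bsub>G\<^esub> g [^]\<^bsub>G\<^esub> i"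
    unfolding p1 A_succ[OF d] using g x phi by (simp add: G.m_assoc hom_closed)
  also have "\<dots> = (g \<otimes>\<^bsub>G\<^esub> \<phi> ?x) \<otimes>\<^bsub>G\<^esub> g [^]\<^bsub>G\<^esub> i"
    using C x unfolding C_def by simp
  also have "\<dots> = g \<otimes>\<^bsub>G\<^esub> (\<phi> ?x \<otimes>\<^bsub>G\<^esub> g [^]\<^bsub>G\<^esub> i)"
    using x g phi by (simp add: G.m_assoc hom_closed)
  also have "\<dots> = g [^]\<^bsub>G\<^esub> (i+1) \<otimes>\<^bsub>G\<^esub> \<phi> \<delta>"
    unfolding p1 using step1.IH g phi d by (simp add: G.m_assoc hom_closed)
  finally show ?case .
next
  case (step2 i)
  let ?x = "A (i - 1) \<delta>"
  have x: "?x \<in> carrier \<Gamma>" using d by simp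
  have sx: "\<sigma> ?x = A i \<delta>" using A_succ[of \<delta> "i - 1"] d by simp
  have gi: "g [^]\<^bsub>G\<^esub> i = g \<otimes>\<^bsub>G\<^esub> g [^]\<^bsub>G\<^esub> (i - 1)"
    using G.int_pow_mult[OF g, of 1 "i - 1"] g by simp
  have "g \<otimes>\<^bsub>G\<^esub> (\<phi> ?x \<otimes>\<^bsub>G\<^esub> g [^]\<^bsub>G\<^esub> (i - 1)) = (g \<otimes>\<^bsub>G\<^esub> \<phi> ?x) \<otimes>\<^bsub>G\<^esub> g [^]\<^bsub>G\<^esub> (i - 1)"
    using g x phi by (simp add: G.m_assoc hom_closed)
  also have "\<dots> = (\<phi> (\<sigma> ?x) \<otimes>\<^bsub>G\<^esub> g) \<otimes>\<^bsub>G\<^esub> g [^]\<^bsub>G\<^esub> (i - 1)"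
    using C x unfolding C_def by simp
  also have "\<dots> = \<phi> (\<sigma> ?x) \<otimes>\<^bsub>G\<^esub> g [^]\<^bsub>G\<^esub> i"
    using x g phi gi by (simp add: G.m_assoc hom_closed)
  also have "\<dots> = g [^]\<^bsub>G\<^esub> i \<otimes>\<^bsub>G\<^esub> \<phi> \<delta>" using sx step2.IH by simp
  also have "\<dots> = g \<otimes>\<^bsub>G\<^esub> (g [^]\<^bsub>G\<^esub> (i - 1) \<otimes>\<^bsub>G\<^esub> \<phi> \<delta>)"
    using gi g phi d by (simp add: G.m_assoc hom_closed)
  finally show ?case using g x d phi by (simp add: G.l_cancel hom_closed)
qed


definition "F \<psi> = ((\<lambda>\<gamma>\<in>carrier \<Gamma>. \<psi> (\<gamma>, 0::int)), \<psi> (\<one>\<^bsub>\<Gamma>\<^esub>, 1::int))"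
definition "Fi p = (\<lambda>x\<in>carrier \<Gamma> \<times> (UNIV::int set). fst p (fst x) \<otimes>\<^bsub>G\<^esub> snd p [^]\<^bsub>G\<^esub> snd x)"

lemma A1: "x \<in> carrier \<Gamma> \<Longrightarrow> A 1 x = \<sigma> x"
  using A_succ[of x 0] by simp

lemma Hom_gh: "\<psi> \<in> Hom H G \<Longrightarrow> group_hom H G \<psi>"
  using H_group G.is_group by (simp add: group_hom_def group_hom_axioms_def Hom_def)

lemma hom_phi_one: "\<phi> \<in> hom \<Gamma> G \<Longrightarrow> \<phi> \<one> = \<one>\<^bsub>G\<^esub>"
  using G.is_group is_group by (simp add: group_hom_def group_hom_axioms_def group_hom.hom_one)

lemma F_in: assumes "\<psi> \<in> Hom H G" shows "F \<psi> \<in> Pairs"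
proof -
  interpret gh: group_hom H G \<psi> using Hom_gh[OF assms] .
  have hp: "\<psi> \<in> hom H G" using assms by (simp add: Hom_def)
  let ?\<phi> = "\<lambda>\<gamma>\<in>carrier \<Gamma>. \<psi> (\<gamma>, 0::int)"
  have "?\<phi> \<in> hom \<Gamma> G"
  proof (rule homI)
    fix x assume "x \<in> carrier \<Gamma>" then show "?\<phi> x \<in> carrier G" using hp by (auto simp: hom_def)
  next
    fix x y assume xy: "x \<in> carrier \<Gamma>" "y \<in> carrier \<Gamma>"
    have "\<psi> ((x, 0) \<otimes>\<^bsub>H\<^esub> (y, 0)) = \<psi> (x,0) \<otimes>\<^bsub>G\<^esub> \<psi> (y,0)" using xy by (intro gh.hom_mult) auto
    then show "?\<phi> (x \<otimes> y) = ?\<phi> x \<otimes>\<^bsub>G\<^esub> ?\<phi> y" using xy by simp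
  qed
  moreover have "\<psi> (\<one>, 1) \<in> carrier G" by (intro gh.hom_closed) simp
  moreover have "C ?\<phi> (\<psi> (\<one>, 1))" unfolding C_def
  proof
    fix d assume d: "d \<in> carrier \<Gamma>"
    have "\<psi> ((\<one>, 1) \<otimes>\<^bsub>H\<^esub> (d, 0)) = \<psi> (\<one>, 1) \<otimes>\<^bsub>G\<^esub> \<psi> (d,0)" using d by (intro gh.hom_mult) auto
    moreover have "\<psi> ((\<sigma> d, 0) \<otimes>\<^bsub>H\<^esub> (\<one>, 1)) = \<psi> (\<sigma> d, 0) \<otimes>\<^bsub>G\<^esub> \<psi> (\<one>,1)" using d by (intro gh.hom_mult) auto
    ultimately show "\<psi> (\<one>, 1) \<otimes>\<^bsub>G\<^esub> ?\<phi> d = ?\<phi> (\<sigma> d) \<otimes>\<^bsub>G\<^esub> \<psi> (\<one>, 1)"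
      using d by (simp add: A1)
  qed
  ultimately show ?thesis by (simp add: F_def Pairs_def Hom_def)
qed

lemma Fi_in: assumes "p \<in> Pairs" shows "Fi p \<in> Hom H G"
proof -
  obtain \<phi> g where p: "p = (\<phi>, g)" "\<phi> \<in> hom \<Gamma> G" "g \<in> carrier G" "C \<phi> g"
    using assms by (auto simp: Pairs_def Hom_def)
  have "Fi p \<in> hom H G"
  proof (rule homI)
    fix x assume "x \<in> carrier H" then show "Fi p x \<in> carrier G"
      using p by (auto simp: Fi_def hom_closed)
  next
    fix x y assume xy: "x \<in> carrier H" "y \<in> carrier H"
    obtain a m b n where x: "x = (a, m)" "y = (b, n)" "a \<in> carrier \<Gamma>" "b \<in> carrier \<Gamma>"
      using xy by auto
    have "Fi p (x \<otimes>\<^bsub>H\<^esub> y) = \<phi> a \<otimes>\<^bsub>G\<^esub> (\<phi> (A m b) \<otimes>\<^bsub>G\<^esub> g [^]\<^bsub>G\<^esub> m) \<otimes>\<^bsub>G\<^esub> g [^]\<^bsub>G\<^esub> n"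
      using x p by (simp add: Fi_def hom_mult G.int_pow_mult G.m_assoc hom_closed)
    also have "\<dots> = \<phi> a \<otimes>\<^bsub>G\<^esub> (g [^]\<^bsub>G\<^esub> m \<otimes>\<^bsub>G\<^esub> \<phi> b) \<otimes>\<^bsub>G\<^esub> g [^]\<^bsub>G\<^esub> n"
      using key[OF p(2-4) x(4)] by simp
    also have "\<dots> = Fi p x \<otimes>\<^bsub>G\<^esub> Fi p y"
      using x p by (simp add: Fi_def G.m_assoc hom_closed)
    finally show "Fi p (x \<otimes>\<^bsub>H\<^esub> y) = Fi p x \<otimes>\<^bsub>G\<^esub> Fi p y" .
  qed
  then show ?thesis by (simp add: Hom_def Fi_def)
qed

lemma F_Fi: assumes "p \<in> Pairs" shows "F (Fi p) = p"
proof -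
  obtain \<phi> g where p: "p = (\<phi>, g)" "\<phi> \<in> hom \<Gamma> G" "g \<in> carrier G" "\<phi> \<in> extensional (carrier \<Gamma>)"
    using assms by (auto simp: Pairs_def Hom_def)
  have "(\<lambda>\<gamma>\<in>carrier \<Gamma>. Fi p (\<gamma>, 0::int)) = \<phi>"
    using p by (auto simp: Fi_def hom_closed intro!: extensionalityI[OF _ p(4)])
  moreover have "Fi p (\<one>, 1) = g" using p by (simp add: Fi_def hom_phi_one)
  ultimately show ?thesis using p by (simp add: F_def)
qed

lemma Fi_F: assumes "\<psi> \<in> Hom H G" shows "Fi (F \<psi>) = \<psi>"
proof -
  interpret gh: group_hom H G \<psi> using Hom_gh[OF assms] .
  let ?g = "\<psi> (\<one>, 1)"
  have g: "?g \<in> carrier G" by (intro gh.hom_closed) simp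
  have pw: "\<psi> (\<one>, m) = ?g [^]\<^bsub>G\<^esub> m" for m
  proof (induction m rule: int_induct[where k=0])
    case base then show ?case using gh.hom_one by simp
  next
    case (step1 i)
    have "\<psi> ((\<one>, i) \<otimes>\<^bsub>H\<^esub> (\<one>, 1)) = \<psi> (\<one>, i) \<otimes>\<^bsub>G\<^esub> ?g" by (intro gh.hom_mult) auto
    then show ?case using step1 G.int_pow_mult[OF g, of i 1] g by simp
  next
    case (step2 i)
    have "\<psi> ((\<one>, i - 1) \<otimes>\<^bsub>H\<^esub> (\<one>, 1)) = \<psi> (\<one>, i - 1) \<otimes>\<^bsub>G\<^esub> ?g" by (intro gh.hom_mult) auto
    then have "?g [^]\<^bsub>G\<^esub> i = \<psi> (\<one>, i - 1) \<otimes>\<^bsub>G\<^esub> ?g" using step2 by simp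
    moreover have "?g [^]\<^bsub>G\<^esub> i = ?g [^]\<^bsub>G\<^esub> (i - 1) \<otimes>\<^bsub>G\<^esub> ?g"
      using G.int_pow_mult[OF g, of "i - 1" 1] g by simp
    moreover have "\<psi> (\<one>, i - 1) \<in> carrier G" by (intro gh.hom_closed) simp
    ultimately show ?case using g G.right_cancel[of ?g "\<psi> (\<one>, i - 1)" "?g [^]\<^bsub>G\<^esub> (i - 1)"] by simp
  qed
  show ?thesis
  proof (rule extensionalityI[of _ "carrier H"])
    show "Fi (F \<psi>) \<in> extensional (carrier H)" by (simp add: Fi_def)
    show "\<psi> \<in> extensional (carrier H)" using assms by (simp add: Hom_def)
  next
    fix x assume "x \<in> carrier H"
    then obtain a m where x: "x = (a, m)" "a \<in> carrier \<Gamma>" by auto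
    have "\<psi> ((a, 0) \<otimes>\<^bsub>H\<^esub> (\<one>, m)) = \<psi> (a, 0) \<otimes>\<^bsub>G\<^esub> \<psi> (\<one>, m)" using x by (intro gh.hom_mult) auto
    moreover have "\<psi> (\<one>, m) = ?g [^]\<^bsub>G\<^esub> m" by (rule pw)
    ultimately show "Fi (F \<psi>) x = \<psi> x" using x by (simp add: Fi_def F_def)
  qed
qed

lemma bij_F: "bij_betw F (Hom H G) Pairs"
  by (rule bij_betw_byWitness[of _ Fi]) (auto simp: F_in Fi_in F_Fi Fi_F)

lemma card_Hom_Pairs: "card (Hom H G) = card Pairs"
  by (rule bij_betw_same_card[OF bij_F])


abbreviation "E \<equiv> {\<phi> \<in> Hom \<Gamma> G. \<exists>g\<in>carrier G. C \<phi> g}"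

lemma Hom_sigma_eq: "Hom_sigma \<Gamma> \<sigma> G = E"
proof -
  have "(\<exists>h\<in>carrier G. conj_act \<Gamma> G h \<phi> = twist \<Gamma> \<sigma> \<phi>) \<longleftrightarrow> (\<exists>g\<in>carrier G. C \<phi> g)"
    if phi: "\<phi> \<in> hom \<Gamma> G" for \<phi>
  proof
    assume "\<exists>h\<in>carrier G. conj_act \<Gamma> G h \<phi> = twist \<Gamma> \<sigma> \<phi>"
    then obtain h where h: "h \<in> carrier G" "conj_act \<Gamma> G h \<phi> = twist \<Gamma> \<sigma> \<phi>" by blast
    have "C \<phi> (inv\<^bsub>G\<^esub> h)" unfolding C_def
    proof
      fix d assume d: "d \<in> carrier \<Gamma>"
      have "conj_act \<Gamma> G h \<phi> (\<sigma> d) = twist \<Gamma> \<sigma> \<phi> (\<sigma> d)" using h by simp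
      then have e: "h \<otimes>\<^bsub>G\<^esub> \<phi> (\<sigma> d) \<otimes>\<^bsub>G\<^esub> inv\<^bsub>G\<^esub> h = \<phi> d"
        using d by (simp add: conj_act_def twist_def)
      show "inv\<^bsub>G\<^esub> h \<otimes>\<^bsub>G\<^esub> \<phi> d = \<phi> (\<sigma> d) \<otimes>\<^bsub>G\<^esub> inv\<^bsub>G\<^esub> h"
        unfolding e[symmetric] using h d phi by (simp add: G.m_assoc hom_closed)
    qed
    then show "\<exists>g\<in>carrier G. C \<phi> g" using h by blast
  next
    assume "\<exists>g\<in>carrier G. C \<phi> g"
    then obtain g where g: "g \<in> carrier G" "C \<phi> g" by blast
    have "conj_act \<Gamma> G (inv\<^bsub>G\<^esub> g) \<phi> = twist \<Gamma> \<sigma> \<phi>"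
      unfolding conj_act_def twist_def
    proof (rule restrict_ext)
      fix x assume x: "x \<in> carrier \<Gamma>"
      have e: "g \<otimes>\<^bsub>G\<^esub> \<phi> (\<tau> x) = \<phi> x \<otimes>\<^bsub>G\<^esub> g" using g x unfolding C_def by (metis s_t t_closed)
      have "\<phi> (\<tau> x) = inv\<^bsub>G\<^esub> g \<otimes>\<^bsub>G\<^esub> (g \<otimes>\<^bsub>G\<^esub> \<phi> (\<tau> x))" using g x phi by (simp add: hom_closed)
      also have "\<dots> = inv\<^bsub>G\<^esub> g \<otimes>\<^bsub>G\<^esub> \<phi> x \<otimes>\<^bsub>G\<^esub> inv\<^bsub>G\<^esub> (inv\<^bsub>G\<^esub> g)"
        unfolding e using g x phi by (simp add: G.m_assoc hom_closed)
      finally show "inv\<^bsub>G\<^esub> g \<otimes>\<^bsub>G\<^esub> \<phi> x \<otimes>\<^bsub>G\<^esub> inv\<^bsub>G\<^esub> (inv\<^bsub>G\<^esub> g) = \<phi> (\<tau> x)" ..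
    qed
    then show "\<exists>h\<in>carrier G. conj_act \<Gamma> G h \<phi> = twist \<Gamma> \<sigma> \<phi>" using g by blast
  qed
  then show ?thesis unfolding Hom_sigma_def Hom_def by auto
qed

lemma conj_in_E:
  assumes phi: "\<phi> \<in> E" and h: "h \<in> carrier G"
  shows "conj_act \<Gamma> G h \<phi> \<in> E"
proof -
  obtain g where g: "g \<in> carrier G" "C \<phi> g" and ph: "\<phi> \<in> hom \<Gamma> G" using phi by (auto simp: Hom_def)
  let ?c = "conj_act \<Gamma> G h \<phi>"
  have cx: "?c x = h \<otimes>\<^bsub>G\<^esub> \<phi> x \<otimes>\<^bsub>G\<^esub> inv\<^bsub>G\<^esub> h" if "x \<in> carrier \<Gamma>" for x
    using that by (simp add: conj_act_def)
  have "?c \<in> hom \<Gamma> G"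
  proof (rule homI)
    fix x assume "x \<in> carrier \<Gamma>" then show "?c x \<in> carrier G" using h ph by (simp add: cx hom_closed)
  next
    fix x y assume xy: "x \<in> carrier \<Gamma>" "y \<in> carrier \<Gamma>"
    then show "?c (x \<otimes> y) = ?c x \<otimes>\<^bsub>G\<^esub> ?c y" using h ph by (simp add: cx hom_closed hom_mult G.m_assoc)
  qed
  moreover have "C ?c (h \<otimes>\<^bsub>G\<^esub> g \<otimes>\<^bsub>G\<^esub> inv\<^bsub>G\<^esub> h)" unfolding C_def
  proof
    fix d assume d: "d \<in> carrier \<Gamma>"
    have e: "g \<otimes>\<^bsub>G\<^esub> \<phi> d = \<phi> (\<sigma> d) \<otimes>\<^bsub>G\<^esub> g" using g d unfolding C_def by blast
    have "h \<otimes>\<^bsub>G\<^esub> g \<otimes>\<^bsub>G\<^esub> inv\<^bsub>G\<^esub> h \<otimes>\<^bsub>G\<^esub> ?c d = h \<otimes>\<^bsub>G\<^esub> (g \<otimes>\<^bsub>G\<^esub> \<phi> d) \<otimes>\<^bsub>G\<^esub> inv\<^bsub>G\<^esub> h"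
      using d h g ph by (simp add: cx hom_closed G.m_assoc)
    also have "\<dots> = ?c (\<sigma> d) \<otimes>\<^bsub>G\<^esub> (h \<otimes>\<^bsub>G\<^esub> g \<otimes>\<^bsub>G\<^esub> inv\<^bsub>G\<^esub> h)"
      unfolding e using d h g ph by (simp add: cx hom_closed G.m_assoc)
    finally show "h \<otimes>\<^bsub>G\<^esub> g \<otimes>\<^bsub>G\<^esub> inv\<^bsub>G\<^esub> h \<otimes>\<^bsub>G\<^esub> ?c d = ?c (\<sigma> d) \<otimes>\<^bsub>G\<^esub> (h \<otimes>\<^bsub>G\<^esub> g \<otimes>\<^bsub>G\<^esub> inv\<^bsub>G\<^esub> h)" .
  qed
  moreover have "h \<otimes>\<^bsub>G\<^esub> g \<otimes>\<^bsub>G\<^esub> inv\<^bsub>G\<^esub> h \<in> carrier G" using h g by simp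
  ultimately show ?thesis by (auto simp: Hom_def conj_act_def)
qed

lemma conj_comp:
  assumes phi: "\<phi> \<in> E" and h: "h \<in> carrier G" and k: "k \<in> carrier G"
  shows "conj_act \<Gamma> G (h \<otimes>\<^bsub>G\<^esub> k) \<phi> = conj_act \<Gamma> G h (conj_act \<Gamma> G k \<phi>)"
  using phi h k unfolding conj_act_def
  by (intro restrict_ext) (auto simp: G.inv_mult_group G.m_assoc Hom_def hom_closed)

lemma conj_one:
  assumes phi: "\<phi> \<in> E" shows "conj_act \<Gamma> G \<one>\<^bsub>G\<^esub> \<phi> = \<phi>"
  using phi unfolding conj_act_def
  by (intro extensionalityI[of _ "carrier \<Gamma>"]) (auto simp: Hom_def hom_closed)

abbreviation "act \<equiv> (\<lambda>h. \<lambda>\<phi>\<in>E. conj_act \<Gamma> G h \<phi>)"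

lemma action: "group_action G E act"
proof (rule group_actionI'[OF G.is_group])
  show "\<And>g x. g \<in> carrier G \<Longrightarrow> x \<in> E \<Longrightarrow> conj_act \<Gamma> G g x \<in> E" by (rule conj_in_E)
qed (simp_all add: conj_comp conj_one)


lemma orbits_eq: "orbits G E act = Hom_sigma_orbits \<Gamma> \<sigma> G"
  unfolding orbits_def orbit_def Hom_sigma_orbits_def Hom_sigma_eq by auto

definition "Cset \<phi> = {g \<in> carrier G. C \<phi> g}"

lemma Pairs_Sigma: "Pairs = Sigma E Cset"
  unfolding Pairs_def Cset_def by auto

lemma stab_card:
  assumes phi: "\<phi> \<in> E" shows "card (stabilizer G act \<phi>) = card (Cset \<phi>)"
proof -
  obtain g0 where g0: "g0 \<in> carrier G" "C \<phi> g0" and ph: "\<phi> \<in> hom \<Gamma> G"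
    and ext: "\<phi> \<in> extensional (carrier \<Gamma>)" using phi by (auto simp: Hom_def)
  have stab: "stabilizer G act \<phi> = {h \<in> carrier G. \<forall>x\<in>carrier \<Gamma>. h \<otimes>\<^bsub>G\<^esub> \<phi> x = \<phi> x \<otimes>\<^bsub>G\<^esub> h}"
  proof -
    have "conj_act \<Gamma> G h \<phi> = \<phi> \<longleftrightarrow> (\<forall>x\<in>carrier \<Gamma>. h \<otimes>\<^bsub>G\<^esub> \<phi> x = \<phi> x \<otimes>\<^bsub>G\<^esub> h)"
      if h: "h \<in> carrier G" for h
    proof
      assume e: "conj_act \<Gamma> G h \<phi> = \<phi>"
      show "\<forall>x\<in>carrier \<Gamma>. h \<otimes>\<^bsub>G\<^esub> \<phi> x = \<phi> x \<otimes>\<^bsub>G\<^esub> h"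
      proof
        fix x assume x: "x \<in> carrier \<Gamma>"
        have "h \<otimes>\<^bsub>G\<^esub> \<phi> x \<otimes>\<^bsub>G\<^esub> inv\<^bsub>G\<^esub> h = \<phi> x" using fun_cong[OF e, of x] x by (simp add: conj_act_def)
        then show "h \<otimes>\<^bsub>G\<^esub> \<phi> x = \<phi> x \<otimes>\<^bsub>G\<^esub> h"
          using h x ph by (metis G.inv_solve_right G.m_closed hom_closed)
      qed
    next
      assume e: "\<forall>x\<in>carrier \<Gamma>. h \<otimes>\<^bsub>G\<^esub> \<phi> x = \<phi> x \<otimes>\<^bsub>G\<^esub> h"
      show "conj_act \<Gamma> G h \<phi> = \<phi>" unfolding conj_act_def
      proof (rule extensionalityI[OF _ ext])
        show "(\<lambda>\<gamma>\<in>carrier \<Gamma>. h \<otimes>\<^bsub>G\<^esub> \<phi> \<gamma> \<otimes>\<^bsub>G\<^esub> inv\<^bsub>G\<^esub> h) \<in> extensional (carrier \<Gamma>)" by simp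
      next
        fix x assume x: "x \<in> carrier \<Gamma>"
        then show "(\<lambda>\<gamma>\<in>carrier \<Gamma>. h \<otimes>\<^bsub>G\<^esub> \<phi> \<gamma> \<otimes>\<^bsub>G\<^esub> inv\<^bsub>G\<^esub> h) x = \<phi> x"
          using e h ph by (simp add: G.m_assoc hom_closed)
      qed
    qed
    then show ?thesis using phi by (auto simp: stabilizer_def)
  qed
  have img: "Cset \<phi> = (\<lambda>h. g0 \<otimes>\<^bsub>G\<^esub> h) ` stabilizer G act \<phi>"
  proof
    show "(\<lambda>h. g0 \<otimes>\<^bsub>G\<^esub> h) ` stabilizer G act \<phi> \<subseteq> Cset \<phi>"
    proof
      fix y assume "y \<in> (\<lambda>h. g0 \<otimes>\<^bsub>G\<^esub> h) ` stabilizer G act \<phi>"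
      then obtain h where y: "y = g0 \<otimes>\<^bsub>G\<^esub> h" and h: "h \<in> carrier G"
        and hc: "\<forall>x\<in>carrier \<Gamma>. h \<otimes>\<^bsub>G\<^esub> \<phi> x = \<phi> x \<otimes>\<^bsub>G\<^esub> h" unfolding stab by blast
      have "C \<phi> y" unfolding C_def
      proof
        fix d assume d: "d \<in> carrier \<Gamma>"
        have "y \<otimes>\<^bsub>G\<^esub> \<phi> d = g0 \<otimes>\<^bsub>G\<^esub> (h \<otimes>\<^bsub>G\<^esub> \<phi> d)" using y h g0 d ph by (simp add: G.m_assoc hom_closed)
        also have "\<dots> = (g0 \<otimes>\<^bsub>G\<^esub> \<phi> d) \<otimes>\<^bsub>G\<^esub> h" using hc d h g0 ph by (simp add: G.m_assoc hom_closed)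
        also have "\<dots> = \<phi> (\<sigma> d) \<otimes>\<^bsub>G\<^esub> y" using g0 d h ph y unfolding C_def by (simp add: G.m_assoc hom_closed)
        finally show "y \<otimes>\<^bsub>G\<^esub> \<phi> d = \<phi> (\<sigma> d) \<otimes>\<^bsub>G\<^esub> y" .
      qed
      then show "y \<in> Cset \<phi>" using y h g0 by (simp add: Cset_def)
    qed
  next
    show "Cset \<phi> \<subseteq> (\<lambda>h. g0 \<otimes>\<^bsub>G\<^esub> h) ` stabilizer G act \<phi>"
    proof
      fix g assume "g \<in> Cset \<phi>"
      then have g: "g \<in> carrier G" "C \<phi> g" by (auto simp: Cset_def)
      let ?h = "inv\<^bsub>G\<^esub> g0 \<otimes>\<^bsub>G\<^esub> g"
      have "\<forall>x\<in>carrier \<Gamma>. ?h \<otimes>\<^bsub>G\<^esub> \<phi> x = \<phi> x \<otimes>\<^bsub>G\<^esub> ?h"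
      proof
        fix x assume x: "x \<in> carrier \<Gamma>"
        have e1: "g \<otimes>\<^bsub>G\<^esub> \<phi> x = \<phi> (\<sigma> x) \<otimes>\<^bsub>G\<^esub> g" using g x unfolding C_def by blast
        have e2: "g0 \<otimes>\<^bsub>G\<^esub> \<phi> x = \<phi> (\<sigma> x) \<otimes>\<^bsub>G\<^esub> g0" using g0 x unfolding C_def by blast
        have "\<phi> (\<sigma> x) = g0 \<otimes>\<^bsub>G\<^esub> \<phi> x \<otimes>\<^bsub>G\<^esub> inv\<^bsub>G\<^esub> g0"
          unfolding e2 using g0 x ph by (simp add: G.m_assoc hom_closed)
        then have "?h \<otimes>\<^bsub>G\<^esub> \<phi> x = inv\<^bsub>G\<^esub> g0 \<otimes>\<^bsub>G\<^esub> (g0 \<otimes>\<^bsub>G\<^esub> \<phi> x \<otimes>\<^bsub>G\<^esub> inv\<^bsub>G\<^esub> g0) \<otimes>\<^bsub>G\<^esub> g"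
          using e1 g g0 x ph by (simp add: G.m_assoc hom_closed)
        also have "\<dots> = \<phi> x \<otimes>\<^bsub>G\<^esub> ?h" using g g0 x ph by (simp add: G.m_assoc hom_closed)
        finally show "?h \<otimes>\<^bsub>G\<^esub> \<phi> x = \<phi> x \<otimes>\<^bsub>G\<^esub> ?h" .
      qed
      then have "?h \<in> stabilizer G act \<phi>" using g g0 unfolding stab by simp
      moreover have "g = g0 \<otimes>\<^bsub>G\<^esub> ?h" using g g0 by simp
      ultimately show "g \<in> (\<lambda>h. g0 \<otimes>\<^bsub>G\<^esub> h) ` stabilizer G act \<phi>" by blast
    qed
  qed
  have "inj_on (\<lambda>h. g0 \<otimes>\<^bsub>G\<^esub> h) (stabilizer G act \<phi>)"
    using g0 unfolding stab by (auto intro: inj_onI)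
  then show ?thesis unfolding img by (simp add: card_image)
qed


lemma count:
  assumes fG: "finite (carrier G)" and fP: "finite Pairs"
  shows "finite E" "card Pairs = card (orbits G E act) * order G"
proof -
  have "E = fst ` Pairs"
  proof
    show "E \<subseteq> fst ` Pairs"
    proof
      fix \<phi> assume "\<phi> \<in> E"
      then obtain g where "g \<in> Cset \<phi>" by (auto simp: Cset_def)
      then show "\<phi> \<in> fst ` Pairs" using \<open>\<phi> \<in> E\<close> unfolding Pairs_Sigma by force
    qed
  qed (auto simp: Pairs_Sigma)
  then show fE: "finite E" using fP by simp
  interpret ga: group_action G E act by (rule action)
  have "card Pairs = (\<Sum>\<phi>\<in>E. card (Cset \<phi>))"
    unfolding Pairs_Sigma using fE fG by (subst card_SigmaI) (auto simp: Cset_def)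
  also have "\<dots> = (\<Sum>\<phi>\<in>E. card (stabilizer G act \<phi>))" by (simp add: stab_card)
  also have "\<dots> = (\<Sum>orb\<in>orbits G E act. \<Sum>\<phi>\<in>orb. card (stabilizer G act \<phi>))"
    by (rule ga.disjoint_sum[OF fE, of "\<lambda>\<phi>. card (stabilizer G act \<phi>)", symmetric])
  also have "\<dots> = (\<Sum>orb\<in>orbits G E act. order G)"
    using ga.card_stablizer_sum[OF fG] by simp
  also have "\<dots> = card (orbits G E act) * order G" by simp
  finally show "card Pairs = card (orbits G E act) * order G" .
qed

end

theorem corollary3p2:
  fixes \<Gamma> :: "('a, 'b) monoid_scheme" and G :: "('c, 'd) monoid_scheme" and \<sigma> :: "'a \<Rightarrow> 'a"
  assumes "group \<Gamma>"
    and "\<sigma> \<in> iso \<Gamma> \<Gamma>"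
    and "finitely_generated (semidirect_Z \<Gamma> \<sigma>)"
    and "group G"
    and "finite (carrier G)"
  shows "finite (Hom_sigma \<Gamma> \<sigma> G)
    \<and> real (card (Hom (semidirect_Z \<Gamma> \<sigma>) G)) / real (card (carrier G))
        = real (card (Hom_sigma_orbits \<Gamma> \<sigma> G))
    \<and> card (carrier G) dvd card (Hom (semidirect_Z \<Gamma> \<sigma>) G)"
proof -
  interpret sdz2 \<Gamma> \<sigma> G
    using assms by (simp add: sdz2_def sdz_def sdz_axioms_def)
  have fH: "finite (Hom (semidirect_Z \<Gamma> \<sigma>) G)"
    by (rule finite_Hom[OF H_group assms(4,5,3)])
  have fP: "finite Pairs" using bij_betw_finite[OF bij_F] fH by simp
  note c = count[OF assms(5) fP]
  have eq: "card (Hom (semidirect_Z \<Gamma> \<sigma>) G) = card (Hom_sigma_orbits \<Gamma> \<sigma> G) * card (carrier G)"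
    using c(2) card_Hom_Pairs orbits_eq by (simp add: order_def)
  have pos: "card (carrier G) > 0" using assms(5) G.one_closed by (auto simp: card_gt_0_iff)
  show ?thesis using c(1) eq pos Hom_sigma_eq by auto
qed

end
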